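(* Let $X$ and $Y$ be finite-dimensional real Banach spaces and let $T:X\to Y$ be a Hahn-Banach operator of rank $k$ with $\|T\|=1$. Let $x_0\in S(X)$ satisfy $\|Tx_0\|=1$. Then $Tx_0$ belongs to a support set of $B(Y)$ of dimension at least $k-1-d(x_0)$.
   Context: All spaces are real. $S(X)$ and $B(X)$ denote the unit sphere and closed unit ball of a Banach space $X$. A bounded linear operator $T:X\to Y$ between Banach spaces is a Hahn-Banach operator if for every Banach space $Z$ and every isometric embedding of $X$ into $Z$ (regarding $X$ as a subspace of $Z$) there exists a bounded linear operator $\tilde T:Z\to Y$ with $\|\tilde T\|=\|T\|$ and $\tilde Tx=Tx$ for all $x\in X$. For a finite-dimensional space $Y$, a support set of $B(Y)$ is the intersection of $B(Y)$ with a supporting hyperplane of $B(Y)$; the dimension of a set is the dimension of its affine hull. For $x\in S(X)$, $d(x)$ is the dimension of the set $\{x^*\in S(X^* ): x^*(x)=1\}$. *)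

theory Defs
  imports "HOL-Analysis.Analysis" "HOL-Probability.Discrete_Topology"
begin

text \<open>Dimension of a set = dimension of its affine hull (= -1 for the empty set).
  For nonempty S and a in S, the affine hull of S is a + span (S - a).\<close>
definition set_dim :: "'a::real_vector set \<Rightarrow> int" where
  "set_dim S = (if S = {} then -1
     else int (dim ((\<lambda>x. x - (SOME a. a \<in> S)) ` S)))"

definition unit_sphere :: "'a::real_normed_vector set" where
  "unit_sphere = {x. norm x = 1}"

definition unit_ball :: "'a::real_normed_vector set" where
  "unit_ball = {x. norm x \<le> 1}"

definition support_set_of_ball :: "'b::real_normed_vector set \<Rightarrow> bool" where
  "support_set_of_ball F \<longleftrightarrow>
     (\<exists>(f::'b \<Rightarrow>\<^sub>L real) c. f \<noteq> 0 \<and> (\<forall>y\<in>unit_ball. blinfun_apply f y \<le> c)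
        \<and> (\<exists>y\<in>unit_ball. blinfun_apply f y = c)
        \<and> F = unit_ball \<inter> {y. blinfun_apply f y = c})"

definition face_dim :: "'a::real_normed_vector \<Rightarrow> int" where
  "face_dim x = set_dim {f::'a \<Rightarrow>\<^sub>L real. norm f = 1 \<and> blinfun_apply f x = 1}"

definition hahn_banach_wrt ::
  "'z::{real_normed_vector,complete_space} itself \<Rightarrow> ('a::real_normed_vector \<Rightarrow> 'b::real_normed_vector) \<Rightarrow> bool" where
  "hahn_banach_wrt _ T \<longleftrightarrow> bounded_linear T \<and>
     (\<forall>J::'a \<Rightarrow> 'z. linear J \<and> (\<forall>x. norm (J x) = norm x) \<longrightarrow>
        (\<exists>S::'z \<Rightarrow> 'b. bounded_linear S \<and> onorm S = onorm T \<and> (\<forall>x. S (J x) = T x)))"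

text \<open>Hahn-Banach operator: Z ranges over (subspaces of) l_infinity = bounded
  (continuous) real functions on nat with the discrete metric, which is 1-injective.\<close>
abbreviation hahn_banach_op :: "('a::real_normed_vector \<Rightarrow> 'b::real_normed_vector) \<Rightarrow> bool" where
  "hahn_banach_op T \<equiv> hahn_banach_wrt TYPE(nat discrete \<Rightarrow>\<^sub>C real) T"

end

theory Submission
  imports Defs
begin

lemma fdvs:
  assumes "finite (Bb::'b::real_vector set)" "independent Bb" "span Bb = UNIV"
  shows "finite_dimensional_vector_space (scaleR :: real \<Rightarrow> 'b \<Rightarrow> 'b) Bb"
  unfolding finite_dimensional_vector_space_def finite_dimensional_vector_space_axioms_def
  apply (intro conjI real_vector.vector_space_axioms)
  using assms unfolding span_raw_def dependent_raw_def
  apply simp_all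
  done

lemma fd_dim_mono:
  assumes "finite (Bb::'b::real_vector set)" "independent Bb" "span Bb = UNIV" "(V::'b set) \<subseteq> span W"
  shows "dim V \<le> dim W"
  unfolding dim_raw_def
  apply (rule finite_dimensional_vector_space.dim_mono[OF fdvs[OF assms(1-3)]])
  using assms(4) unfolding span_raw_def .

lemma fd_dim_insert:
  assumes "finite (Bb::'b::real_vector set)" "independent Bb" "span Bb = UNIV"
  shows "dim (insert (x::'b) S) \<le> dim S + 1"
  unfolding dim_raw_def
  apply (subst finite_dimensional_vector_space.dim_insert[OF fdvs[OF assms(1-3)]])
  apply simp
  done

lemma fin_basis:
  assumes "finite (BY::'b::real_vector set)" "span BY = UNIV"
  shows "\<exists>Bb. finite Bb \<and> independent Bb \<and> span Bb = (UNIV::'b set)"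
proof -
  have i0: "independent ({}::'b set)" by (rule independent_empty)
  define Bb where "Bb = extend_basis ({}::'b set)"
  have "independent Bb" "span Bb = UNIV" using independent_extend_basis[OF i0] span_extend_basis[OF i0] Bb_def by auto
  moreover have "finite Bb" using independent_span_bound[where T=BY and S=Bb] assms \<open>independent Bb\<close> by auto
  ultimately show ?thesis by blast
qed

lemma hb_step:
  fixes h :: "'a::real_normed_vector \<Rightarrow> real"
  assumes B: "independent B" and SB: "S \<subseteq> B" and bS: "b \<notin> S" and bB: "b \<in> B"
    and bound: "\<forall>x\<in>span S. construct B h x \<le> norm x"
  shows "\<exists>c. \<forall>x\<in>span (insert b S). construct B (h(b:=c)) x \<le> norm x"
proof -
  define g where "g = construct B h"
  define g' where "g' c = construct B (h(b:=c))" for c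
  have lg: "linear g" unfolding g_def using B by (rule linear_construct)
  have lg': "linear (g' c)" for c unfolding g'_def using B by (rule linear_construct)
  have agree: "g' c u = g u" if "u \<in> span S" for c u
  proof (rule linear_eq_on_span[OF lg' lg _ that])
    fix x assume "x \<in> S"
    then show "g' c x = g x" unfolding g'_def g_def using SB bS B
      by (auto simp: construct_basis)
  qed
  have gb: "g' c b = c" for c unfolding g'_def using B bB by (simp add: construct_basis)
  define A where "A = {g u - norm (u - b) |u. u \<in> span S}"
  have key: "g u - norm (u - b) \<le> norm (w + b) - g w" if "u \<in> span S" "w \<in> span S" for u w
  proof -
    have "g (u + w) \<le> norm (u + w)" using bound that span_add g_def by blast
    also have "\<dots> \<le> norm (u - b) + norm (w + b)"
      using norm_triangle_ineq[of "u - b" "w + b"] by simp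
    finally show ?thesis using linear_add[OF lg] by simp
  qed
  have Ane: "A \<noteq> {}" unfolding A_def using span_zero by blast
  have Abdd: "bdd_above A" unfolding A_def bdd_above_def
    using key[OF _ span_zero] by blast
  define c where "c = Sup A"
  have c1: "g u - norm (u - b) \<le> c" if "u \<in> span S" for u
    unfolding c_def by (rule cSup_upper[OF _ Abdd]) (use that A_def in blast)
  have c2: "c \<le> norm (w + b) - g w" if "w \<in> span S" for w
    unfolding c_def by (rule cSup_least[OF Ane]) (use key that A_def in blast)
  show ?thesis
  proof (intro exI ballI)
    fix x assume "x \<in> span (insert b S)"
    then obtain t where u: "x - t *\<^sub>R b \<in> span S" by (auto simp: span_insert)
    define u where "u = x - t *\<^sub>R b"
    have xu: "x = u + t *\<^sub>R b" unfolding u_def by simp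
    have gx: "g' c x = g u + t * c"
    proof -
      have "g' c x = g' c u + g' c (t *\<^sub>R b)" using xu linear_add[OF lg'] by metis
      also have "\<dots> = g u + t * c" using linear_scale[OF lg', of c t b] agree[of u] u u_def gb by simp
      finally show ?thesis .
    qed
    have "g u + t * c \<le> norm (u + t *\<^sub>R b)"
    proof (cases "t = 0")
      case True then show ?thesis using bound u u_def g_def by simp
    next
      case False
      show ?thesis
      proof (cases "t > 0")
        case True
        have w: "(1/t) *\<^sub>R u \<in> span S" using u u_def span_scale by blast
        have "c \<le> norm ((1/t) *\<^sub>R u + b) - g ((1/t) *\<^sub>R u)" by (rule c2[OF w])
        also have "(1/t) *\<^sub>R u + b = (1/t) *\<^sub>R (u + t *\<^sub>R b)" using True by (simp add: algebra_simps)
        finally have "c \<le> (1/t) * norm (u + t *\<^sub>R b) - (1/t) * g u"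
          using True linear_scale[OF lg] by simp
        then have "t * c \<le> t * ((1/t) * norm (u + t *\<^sub>R b) - (1/t) * g u)"
          using True by (simp add: mult_left_mono)
        then show ?thesis using True by (simp add: algebra_simps)
      next
        case False
        define s where "s = -t"
        then have s: "s > 0" using \<open>t \<noteq> 0\<close> False by simp
        have ts: "u + t *\<^sub>R b = u - s *\<^sub>R b" using s_def by simp
        have w: "(1/s) *\<^sub>R u \<in> span S" using u u_def span_scale by blast
        have "g ((1/s) *\<^sub>R u) - norm ((1/s) *\<^sub>R u - b) \<le> c" by (rule c1[OF w])
        also have "(1/s) *\<^sub>R u - b = (1/s) *\<^sub>R (u - s *\<^sub>R b)" using s by (simp add: algebra_simps)
        finally have "(1/s) * g u - (1/s) * norm (u - s *\<^sub>R b) \<le> c"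
          using s linear_scale[OF lg] by simp
        then have "s * ((1/s) * g u - (1/s) * norm (u - s *\<^sub>R b)) \<le> s * c"
          using s by (simp add: mult_left_mono)
        then have "g u - norm (u - s *\<^sub>R b) \<le> s * c" using s by (simp add: right_diff_distrib)
        moreover have "t * c = - (s * c)" unfolding s_def by simp
        ultimately show ?thesis unfolding ts by linarith
      qed
    qed
    then show "construct B (h(b:=c)) x \<le> norm x" using gx xu g'_def by simp
  qed
qed

lemma hb_exists:
  fixes v :: "'a::real_normed_vector" and B0 :: "'a set"
  assumes fin: "finite B0" "span B0 = UNIV" and nv: "norm v = 1"
  shows "\<exists>g. linear g \<and> g v = 1 \<and> (\<forall>x. \<bar>g x\<bar> \<le> norm x)"
proof -
  have iv: "independent {v}" using nv by (auto simp: independent_insert)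
  define B where "B = extend_basis {v}"
  have B: "independent B" "span B = UNIV" "v \<in> B"
    using extend_basis_superset[OF iv] independent_extend_basis[OF iv] span_extend_basis[OF iv] B_def by auto
  have finB: "finite B" using independent_span_bound[where T=B0 and S=B] fin B by auto
  have "\<exists>h. h v = 1 \<and> (\<forall>x\<in>span (insert v A). construct B h x \<le> norm x)"
    if "A \<subseteq> B - {v}" for A
  proof -
    have "finite A" using finB that finite_subset by blast
    then show ?thesis using that
    proof (induction A rule: finite_induct)
      case empty
      define h where "h = (\<lambda>b::'a. if b = v then (1::real) else 0)"
      have "construct B h x \<le> norm x" if xv: "x \<in> span {v}" for x
      proof -
        obtain t where "x = t *\<^sub>R v" using xv by (auto simp: span_singleton)
        have "construct B h (t *\<^sub>R v) = t * construct B h v"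
          using linear_scale[OF linear_construct[OF B(1)], of h t v] by simp
        also have "\<dots> = t" using construct_basis[OF B(1) B(3), of h] h_def by simp
        finally show ?thesis using \<open>x = t *\<^sub>R v\<close> nv by simp
      qed
      then show ?case by (intro exI[of _ h]) (simp add: h_def)
    next
      case (insert b A)
      then obtain h where h: "h v = 1" "\<forall>x\<in>span (insert v A). construct B h x \<le> norm x" by blast
      have "insert v A \<subseteq> B" "b \<notin> insert v A" "b \<in> B" using insert B by auto
      from hb_step[OF B(1) this(1,2,3) h(2)] obtain c where
        c: "\<forall>x\<in>span (insert b (insert v A)). construct B (h(b := c)) x \<le> norm x" by blast
      have "b \<noteq> v" using insert by auto
      have e: "insert v (insert b A) = insert b (insert v A)" by blast
      have hv: "(h(b:=c)) v = 1" using h \<open>b \<noteq> v\<close> by simp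
      show ?case unfolding e using c hv by blast
    qed
  qed
  moreover have "insert v (B - {v}) = B" using B(3) by blast
  ultimately obtain h where h: "h v = 1" "\<forall>x\<in>span B. construct B h x \<le> norm x"
    by (metis order_refl)
  define g where "g = construct B h"
  have lg: "linear g" using g_def linear_construct[OF B(1)] by simp
  have "\<bar>g x\<bar> \<le> norm x" for x
  proof -
    have "g x \<le> norm x" "g (-x) \<le> norm (-x)" using h(2) B(2) unfolding g_def by (metis UNIV_I)+
    then show ?thesis using linear_neg[OF lg, of x] by simp
  qed
  moreover have "g v = 1" using g_def construct_basis[OF B(1) B(3), of h] h by simp
  ultimately show ?thesis using lg by blast
qed

lemma countable_dense:
  fixes B :: "'a::real_normed_vector set"
  assumes fin: "finite B" "span B = UNIV"
  shows "\<exists>q::nat \<Rightarrow> 'a. \<forall>x e. e > 0 \<longrightarrow> (\<exists>n. norm (x - q n) < e)"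
proof -
  define Q where "Q = (\<lambda>c. \<Sum>b\<in>B. c b *\<^sub>R b) ` (PiE B (\<lambda>_. \<rat>))"
  have cQ: "countable Q" unfolding Q_def using fin(1) countable_rat
    by (intro countable_image countable_PiE) auto
  have "(\<lambda>b\<in>B. 0::real) \<in> PiE B (\<lambda>_. \<rat>)" by auto
  then have neQ: "Q \<noteq> {}" unfolding Q_def by blast
  have dense: "\<exists>y\<in>Q. norm (x - y) < e" if e: "e > 0" for x e
  proof -
    obtain u where u: "x = (\<Sum>b\<in>B. u b *\<^sub>R b)" using span_finite[OF fin(1)] fin(2) by blast
    define K where "K = 1 + (\<Sum>b\<in>B. norm b)"
    have K: "K > 0" unfolding K_def by (simp add: sum_nonneg add_pos_nonneg)
    define d where "d = e / K"
    have d: "d > 0" unfolding d_def using e K by simp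
    have "\<forall>b. \<exists>r\<in>\<rat>. u b - d < r \<and> r < u b + d"
    proof
      fix b show "\<exists>r\<in>\<rat>. u b - d < r \<and> r < u b + d"
        using Rats_dense_in_real[of "u b - d" "u b + d"] d by simp
    qed
      then have "\<exists>r. \<forall>b. r b \<in> \<rat> \<and> u b - d < r b \<and> r b < u b + d" by (intro choice) blast
    then obtain r where r0: "\<forall>b. r b \<in> \<rat> \<and> u b - d < r b \<and> r b < u b + d" by blast
    have r: "\<And>b. r b \<in> \<rat>" "\<And>b. \<bar>u b - r b\<bar> < d" using r0 by (simp, smt (verit))+
    define c where "c = (\<lambda>b\<in>B. r b)"
    have cP: "c \<in> PiE B (\<lambda>_. \<rat>)" unfolding c_def using r by auto
    have "x - (\<Sum>b\<in>B. c b *\<^sub>R b) = (\<Sum>b\<in>B. (u b - r b) *\<^sub>R b)"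
      unfolding u c_def by (simp add: sum_subtractf scaleR_diff_left)
    also have "norm \<dots> \<le> (\<Sum>b\<in>B. d * norm b)"
      by (rule sum_norm_le) (simp add: mult_right_mono less_imp_le r(2))
    also have "\<dots> = d * (\<Sum>b\<in>B. norm b)" by (simp add: sum_distrib_left)
    also have "\<dots> < d * K" unfolding K_def using d by simp
    also have "\<dots> = e" unfolding d_def using K by simp
    finally show ?thesis using cP unfolding Q_def by blast
  qed
  show ?thesis
  proof (intro exI[of _ "from_nat_into Q"] allI impI)
    fix x and e :: real assume "e > 0"
    then obtain y where "y \<in> Q" "norm (x - y) < e" using dense by blast
    then show "\<exists>n. norm (x - from_nat_into Q n) < e"
      using range_from_nat_into[OF neQ cQ] by (metis rangeE)
  qed
qed

lemma norming_seq:
  fixes B :: "'a::real_normed_vector set"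
  assumes fin: "finite B" "span B = UNIV"
  shows "\<exists>g::nat \<Rightarrow> 'a \<Rightarrow> real. (\<forall>n. linear (g n) \<and> (\<forall>x. \<bar>g n x\<bar> \<le> norm x))
     \<and> (\<forall>x e. e > 0 \<longrightarrow> (\<exists>n. g n x > norm x - e))"
proof -
  obtain q :: "nat \<Rightarrow> 'a" where q: "\<And>x e. e > 0 \<Longrightarrow> \<exists>n. norm (x - q n) < e"
    using countable_dense[OF fin] by blast
  have "\<exists>g. linear g \<and> (\<forall>x. \<bar>g x\<bar> \<le> norm x) \<and> g (q n) = norm (q n)" for n
  proof (cases "q n = 0")
    case True
    then show ?thesis by (intro exI[of _ "\<lambda>x. 0"]) (auto intro: linearI)
  next
    case False
    have "norm ((1 / norm (q n)) *\<^sub>R q n) = 1" using False by simp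
    from hb_exists[OF fin this] obtain g where
      g: "linear g" "g ((1 / norm (q n)) *\<^sub>R q n) = 1" "\<forall>x. \<bar>g x\<bar> \<le> norm x" by blast
    have "g (q n) = norm (q n)" using g(2) linear_scale[OF g(1)] False by (simp add: field_simps)
    then show ?thesis using g by blast
  qed
  then obtain g where g: "\<And>n. linear (g n)" "\<And>n x. \<bar>g n x\<bar> \<le> norm x" "\<And>n. g n (q n) = norm (q n)"
    by metis
  show ?thesis
  proof (intro exI[of _ g] conjI allI impI)
    fix n show "linear (g n)" by (rule g(1))
  next
    fix n x show "\<bar>g n x\<bar> \<le> norm x" by (rule g(2))
  next
    fix x and e :: real assume e: "e > 0"
    then obtain n where n: "norm (x - q n) < e / 2" using q[of "e/2"] by auto
    have "g n x = g n (q n) + g n (x - q n)" using linear_diff[OF g(1), of n x "q n"] by simp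
    moreover have "g n (x - q n) \<ge> - norm (x - q n)" using g(2)[of n "x - q n"] by linarith
    moreover have "norm x \<le> norm (q n) + norm (x - q n)" using norm_triangle_ineq[of "q n" "x - q n"] by simp
    ultimately have "g n x \<ge> norm x - 2 * norm (x - q n)" using g(3)[of n] by linarith
    then show "\<exists>n. g n x > norm x - e" using n by (intro exI[of _ n]) linarith
  qed
qed

type_synonym linf = "nat discrete \<Rightarrow>\<^sub>C real"

lemma continuous_on_discrete: "continuous_on UNIV (f :: 'x discrete \<Rightarrow> 'y::topological_space)"
  unfolding continuous_on_open_invariant using open_discrete by blast

lemma bcontfun_discrete: "(\<And>i. norm (f i) \<le> c) \<Longrightarrow> (f :: 'x discrete \<Rightarrow> 'y::real_normed_vector) \<in> bcontfun"
  by (rule bcontfun_normI[OF continuous_on_discrete])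

lemma embed_exists:
  fixes B :: "'a::real_normed_vector set"
  assumes fin: "finite B" "span B = UNIV"
  shows "\<exists>J::'a \<Rightarrow> linf. linear J \<and> (\<forall>x. norm (J x) = norm x)"
proof -
  obtain g :: "nat \<Rightarrow> 'a \<Rightarrow> real" where g: "\<And>n. linear (g n)" "\<And>n x. \<bar>g n x\<bar> \<le> norm x"
    "\<And>x e. e > 0 \<Longrightarrow> \<exists>n. g n x > norm x - e"
    using norming_seq[OF fin] by blast
  define J where "J x = Bcontfun (\<lambda>i. g (of_discrete i) x)" for x
  have mem: "(\<lambda>i. g (of_discrete i) x) \<in> bcontfun" for x
    by (rule bcontfun_discrete[of _ "norm x"]) (use g(2) in auto)
  have app: "apply_bcontfun (J x) i = g (of_discrete i) x" for x i
    unfolding J_def using Bcontfun_inverse[OF mem] by simp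
  have lin: "linear J"
  proof (rule linearI)
    fix x y show "J (x + y) = J x + J y"
      by (rule bcontfun_eqI) (simp add: app linear_add[OF g(1)])
  next
    fix r x show "J (r *\<^sub>R x) = r *\<^sub>R J x"
      by (rule bcontfun_eqI) (simp add: app linear_scale[OF g(1)])
  qed
  have nrm: "norm (J x) = norm x" for x
  proof (rule antisym)
    show "norm (J x) \<le> norm x" by (rule norm_bound) (use g(2) app in auto)
  next
    show "norm x \<le> norm (J x)"
    proof (rule field_le_epsilon)
      fix e :: real assume "e > 0"
      then obtain n where n: "g n x > norm x - e" using g(3) by blast
      have "\<bar>g n x\<bar> \<le> norm (J x)" using norm_bounded[of "J x" "discrete n"] app[of x "discrete n"]
        by (simp add: discrete_inverse)
      then show "norm x \<le> norm (J x) + e" using n by linarith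
    qed
  qed
  show ?thesis using lin nrm by blast
qed

lemma funct_subseq:
  fixes g :: "nat \<Rightarrow> 'a::real_normed_vector \<Rightarrow> real" and B :: "'a set"
  assumes fin: "finite B" "span B = UNIV" and g: "\<And>j. linear (g j)" "\<And>j x. \<bar>g j x\<bar> \<le> norm x"
  shows "\<exists>r h. strict_mono r \<and> linear h \<and> (\<forall>x. \<bar>h x\<bar> \<le> norm x) \<and> (\<forall>x. (\<lambda>j. g (r j) x) \<longlonglongrightarrow> h x)"
proof -
  have "\<exists>r. strict_mono r \<and> (\<forall>b\<in>A. convergent (\<lambda>j. g (r j) b))" if "A \<subseteq> B" for A
  proof -
    have "finite A" using fin(1) that finite_subset by blast
    then show ?thesis
    proof (induction A rule: finite_induct)
      case empty
      show ?case by (intro exI[of _ id]) (simp add: strict_mono_def)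
    next
      case (insert a A)
      then obtain r where r: "strict_mono r" "\<forall>b\<in>A. convergent (\<lambda>j. g (r j) b)" by blast
      have "bounded (range (\<lambda>j. g (r j) a))"
        by (rule boundedI[of _ "norm a"]) (use g(2) in auto)
      from bounded_imp_convergent_subsequence[OF this] obtain l r' where
        r': "strict_mono r'" "((\<lambda>j. g (r j) a) \<circ> r') \<longlonglongrightarrow> l" by blast
      have "convergent (\<lambda>j. g (r (r' j)) b)" if "b \<in> insert a A" for b
      proof (cases "b = a")
        case True then show ?thesis using r'(2) by (auto simp: convergent_def o_def)
      next
        case False
        then have "convergent (\<lambda>j. g (r j) b)" using that r(2) by auto
        from convergent_subseq_convergent[OF this r'(1)] show ?thesis by (simp add: o_def)
      qed
      moreover have "strict_mono (\<lambda>j. r (r' j))" using strict_mono_o[OF r(1) r'(1)] by (simp add: o_def)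
      ultimately show ?case by (intro exI[of _ "\<lambda>j. r (r' j)"]) blast
    qed
  qed
  from this[of B] obtain r where r: "strict_mono r" "\<forall>b\<in>B. convergent (\<lambda>j. g (r j) b)" by blast
  have conv: "convergent (\<lambda>j. g (r j) x)" for x
  proof -
    obtain u where u: "x = (\<Sum>b\<in>B. u b *\<^sub>R b)" using span_finite[OF fin(1)] fin(2) by blast
    have eq: "g (r j) x = (\<Sum>b\<in>B. u b * g (r j) b)" for j
    proof -
      have "g (r j) x = (\<Sum>b\<in>B. g (r j) (u b *\<^sub>R b))" unfolding u by (rule linear_sum[OF g(1)])
      also have "\<dots> = (\<Sum>b\<in>B. u b * g (r j) b)" by (simp add: linear_scale[OF g(1)])
      finally show ?thesis .
    qed
    have "(\<lambda>j. \<Sum>b\<in>B. u b * g (r j) b) \<longlonglongrightarrow> (\<Sum>b\<in>B. u b * lim (\<lambda>j. g (r j) b))"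
      using r(2) by (intro tendsto_sum tendsto_mult_left) (simp add: convergent_LIMSEQ_iff)
    then show ?thesis unfolding eq convergent_def by blast
  qed
  define h where "h x = lim (\<lambda>j. g (r j) x)" for x
  have lim: "(\<lambda>j. g (r j) x) \<longlonglongrightarrow> h x" for x
    unfolding h_def using conv convergent_LIMSEQ_iff by blast
  have lin: "linear h"
  proof (rule linearI)
    fix x y
    have "(\<lambda>j. g (r j) (x + y)) \<longlonglongrightarrow> h x + h y"
      using tendsto_add[OF lim[of x] lim[of y]] by (simp add: linear_add[OF g(1)])
    then show "h (x + y) = h x + h y" using LIMSEQ_unique[OF lim[of "x + y"]] by simp
  next
    fix c x
    have "(\<lambda>j. g (r j) (c *\<^sub>R x)) \<longlonglongrightarrow> c * h x"
      using tendsto_mult_left[OF lim[of x], of c] by (simp add: linear_scale[OF g(1)])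
    then show "h (c *\<^sub>R x) = c *\<^sub>R h x" using LIMSEQ_unique[OF lim[of "c *\<^sub>R x"]] by simp
  qed
  have bnd: "\<bar>h x\<bar> \<le> norm x" for x
    by (rule LIMSEQ_le_const2[OF tendsto_rabs[OF lim[of x]]]) (use g(2) in auto)
  show ?thesis using r(1) lin bnd lim by blast
qed

lemma unit_functional_blinfun:
  fixes h :: "'a::real_normed_vector \<Rightarrow> real"
  assumes "linear h" "\<And>y. \<bar>h y\<bar> \<le> norm y" "norm x0 = 1" "h x0 = 1"
  shows "bounded_linear h" "norm (Blinfun h) = 1" "blinfun_apply (Blinfun h) = h"
proof -
  show bl: "bounded_linear h"
    by (rule bounded_linear_intro[of _ 1]) (use assms in \<open>auto simp: linear_add linear_scale\<close>)
  show ap: "blinfun_apply (Blinfun h) = h" using bounded_linear_Blinfun_apply[OF bl] .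
  have "onorm h \<le> 1" using onorm_bound[of 1 h] assms(2) by simp
  moreover have "1 \<le> onorm h" using onorm[OF bl, of x0] assms by simp
  ultimately show "norm (Blinfun h) = 1" by (simp add: norm_blinfun.rep_eq ap)
qed

lemma M_lemma:
  fixes x0 x :: "'a::real_normed_vector" and B :: "'a set"
  assumes fin: "finite B" "span B = UNIV" and nx0: "norm x0 = 1"
    and X0: "\<And>f::'a \<Rightarrow>\<^sub>L real. norm f = 1 \<Longrightarrow> blinfun_apply f x0 = 1 \<Longrightarrow> blinfun_apply f x = 0"
    and e: "e > 0"
  shows "\<exists>M. \<forall>g. linear g \<and> (\<forall>y. \<bar>g y\<bar> \<le> norm y) \<longrightarrow> \<bar>g x\<bar> \<le> e + M * (1 - \<bar>g x0\<bar>)"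
proof (rule ccontr)
  assume "\<not> ?thesis"
  then have "\<forall>n::nat. \<exists>g. linear g \<and> (\<forall>y. \<bar>g y\<bar> \<le> norm y) \<and> \<bar>g x\<bar> > e + real n * (1 - \<bar>g x0\<bar>)"
    by (metis not_le)
  then obtain G where G: "\<And>n. linear (G n)" "\<And>n y. \<bar>G n y\<bar> \<le> norm y"
    "\<And>n. \<bar>G n x\<bar> > e + real n * (1 - \<bar>G n x0\<bar>)" by metis
  from funct_subseq[OF fin, of G] G(1,2) obtain r h where
    rh: "strict_mono r" "linear h" "\<forall>x. \<bar>h x\<bar> \<le> norm x" "\<forall>x. (\<lambda>j. G (r j) x) \<longlonglongrightarrow> h x" by blast
  have G0: "\<bar>G n x0\<bar> \<le> 1" for n using G(2)[of n x0] nx0 by simp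
  have Gx: "\<bar>G n x\<bar> \<ge> e" for n
  proof -
    have "real n * (1 - \<bar>G n x0\<bar>) \<ge> 0" using G0[of n] by simp
    then show ?thesis using G(3)[of n] by linarith
  qed
  have hx: "\<bar>h x\<bar> \<ge> e"
    by (rule LIMSEQ_le_const[OF tendsto_rabs[OF rh(4)[rule_format, of x]]]) (use Gx in auto)
  have h0: "\<bar>h x0\<bar> \<ge> 1"
  proof (rule field_le_epsilon)
    fix d :: real assume d: "d > 0"
    obtain N :: nat where N: "real N > norm x / d" using reals_Archimedean2 by blast
    have "1 - d \<le> \<bar>G (r j) x0\<bar>" if "j \<ge> N" for j
    proof -
      have rj: "real (r j) \<ge> real N" using seq_suble[OF rh(1), of j] that by simp
      have "real (r j) * (1 - \<bar>G (r j) x0\<bar>) < norm x"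
        using G(3)[of "r j"] G(2)[of "r j" x] e by linarith
      moreover have "norm x < real (r j) * d"
      proof -
        have "norm x < d * real N" using N d by (simp add: field_simps)
        moreover have "d * real N \<le> d * real (r j)" using rj d by (intro mult_left_mono) auto
        ultimately show ?thesis by (simp add: mult.commute)
      qed
      ultimately have "real (r j) * (1 - \<bar>G (r j) x0\<bar>) < real (r j) * d" by linarith
      moreover have "real (r j) > 0"
      proof -
        have "norm x / d \<ge> 0" using d by simp
        then show ?thesis using N rj by linarith
      qed
      ultimately have "1 - \<bar>G (r j) x0\<bar> < d" using mult_less_cancel_left_pos by blast
      then show ?thesis by linarith
    qed
    then have "1 - d \<le> \<bar>h x0\<bar>"
      by (intro LIMSEQ_le_const[OF tendsto_rabs[OF rh(4)[rule_format, of x0]]]) blast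
    then show "1 \<le> \<bar>h x0\<bar> + d" by linarith
  qed
  have h01: "\<bar>h x0\<bar> = 1" using h0 rh(3) nx0 by (metis antisym)
  define s where "s = sgn (h x0)"
  define h' where "h' y = s * h y" for y
  have s: "\<bar>s\<bar> = 1" "s * h x0 = 1" using h01 unfolding s_def by (auto simp: sgn_if abs_if split: if_splits)
  have lh': "linear h'" unfolding h'_def using rh(2) by (auto intro!: linearI simp: linear_add linear_scale)
  have bh': "\<bar>h' y\<bar> \<le> norm y" for y unfolding h'_def using s rh(3) by (simp add: abs_mult)
  have h'0: "h' x0 = 1" unfolding h'_def using s by simp
  note U = unit_functional_blinfun[OF lh' bh' nx0 h'0]
  have "h' x = 0" using X0[OF U(2)] U(3) h'0 by simp
  then have "h x = 0" unfolding h'_def using s by auto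
  then show False using hx e by simp
qed

lemma app_mk: "(\<And>i. \<bar>f i\<bar> \<le> C) \<Longrightarrow> apply_bcontfun (Bcontfun (f :: nat discrete \<Rightarrow> real)) = f"
  by (rule Bcontfun_inverse[OF bcontfun_discrete]) simp

lemma norm_le1_linf: "(\<And>i. \<bar>apply_bcontfun (u::linf) i\<bar> \<le> c) \<Longrightarrow> norm u \<le> c"
  by (rule norm_bound) simp

lemma app_le_norm: "\<bar>apply_bcontfun (u::linf) i\<bar> \<le> norm u"
  using norm_bounded[of u i] by simp

lemma clamp_aux1: "0 \<le> (H::real) \<Longrightarrow> 0 \<le> e \<Longrightarrow> \<bar>v\<bar> \<le> e + H \<Longrightarrow> \<bar>v - max (-H) (min H v)\<bar> \<le> e"
  by (simp add: max_def min_def abs_if split: if_splits)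
lemma clamp_aux2: "\<bar>a::real\<bar> \<le> 1 \<Longrightarrow> \<bar>b\<bar> \<le> 1 \<Longrightarrow> \<bar>max (-1) (min 1 (a+b)) - a\<bar> \<le> \<bar>b\<bar>"
  by (simp add: max_def min_def abs_if split: if_splits)
lemma clamp_aux3: "\<bar>a::real\<bar> \<le> 1 \<Longrightarrow> \<bar>b\<bar> \<le> 1 \<Longrightarrow> \<bar>b - (max (-1) (min 1 (a+b)) - a)\<bar> \<le> \<bar>b\<bar>"
  by (simp add: max_def min_def abs_if split: if_splits)
lemma clamp_aux4: "\<bar>a::real\<bar> \<le> 1 \<Longrightarrow> \<bar>b\<bar> \<le> 1 \<Longrightarrow> \<bar>a + (max (-1) (min 1 (a+b)) - a)\<bar> \<le> 1"
  by (simp add: max_def min_def abs_if split: if_splits)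
lemma clamp_aux5: "\<bar>a::real\<bar> \<le> 1 \<Longrightarrow> \<bar>b\<bar> \<le> 1 \<Longrightarrow> \<bar>a - (b - (max (-1) (min 1 (a+b)) - a))\<bar> \<le> 1"
  by (simp add: max_def min_def abs_if split: if_splits)
lemma clamp_aux6: "0 \<le> (H::real) \<Longrightarrow> \<bar>max (-H) (min H v)\<bar> \<le> H"
  by (simp add: max_def min_def abs_if split: if_splits)
lemma clamp_aux7: "0 \<le> (H::real) \<Longrightarrow> \<bar>max (-H) (min H v)\<bar> \<le> \<bar>v\<bar>"
  by (simp add: max_def min_def abs_if split: if_splits)

lemma psi_null:
  fixes \<psi> :: "linf \<Rightarrow> real" and a b v :: linf
  assumes lin: "linear \<psi>" and bnd: "\<And>u. \<bar>\<psi> u\<bar> \<le> norm u"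
    and a: "norm a \<le> 1" and pa: "\<psi> a = 1"
    and M: "\<And>e. e > 0 \<Longrightarrow> \<exists>M. \<forall>i. \<bar>apply_bcontfun b i\<bar> \<le> e + M * (1 - \<bar>apply_bcontfun a i\<bar>)"
    and v: "\<And>i. \<bar>apply_bcontfun v i\<bar> \<le> \<bar>apply_bcontfun b i\<bar>"
  shows "\<psi> v = 0"
proof -
  have ai: "\<bar>apply_bcontfun a i\<bar> \<le> 1" for i using app_le_norm[of a i] a by simp
  have "\<bar>\<psi> v\<bar> \<le> e" if e: "e > 0" for e
  proof -
    obtain M0 where M0: "\<forall>i. \<bar>apply_bcontfun b i\<bar> \<le> e + M0 * (1 - \<bar>apply_bcontfun a i\<bar>)" using M[OF e] by blast
    define M' where "M' = max M0 1"
    define h where "h i = 1 - \<bar>apply_bcontfun a i\<bar>" for i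
    have h0: "h i \<ge> 0" for i using ai[of i] h_def by simp
    have M'1: "M' \<ge> 1" unfolding M'_def by simp
    have vb: "\<bar>apply_bcontfun v i\<bar> \<le> e + M' * h i" for i
    proof -
      have "M0 * h i \<le> M' * h i" using h0[of i] unfolding M'_def by (intro mult_right_mono) auto
      then show ?thesis using M0 v[of i] h_def by (smt (verit))
    qed
    define f2 where "f2 i = max (-(M' * h i)) (min (M' * h i) (apply_bcontfun v i))" for i
    define v2 where "v2 = Bcontfun f2"
    have Mh: "M' * h i \<ge> 0" for i using h0[of i] M'1 by simp
    have f2b: "\<bar>f2 i\<bar> \<le> M' * h i" for i unfolding f2_def by (rule clamp_aux6[OF Mh])
    have f2v: "\<bar>f2 i\<bar> \<le> norm v" for i
      using app_le_norm[of v i] clamp_aux7[OF Mh[of i], of "apply_bcontfun v i"] unfolding f2_def by linarith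
    have v2: "apply_bcontfun v2 = f2" unfolding v2_def by (rule app_mk[OF f2v])
    define v1 where "v1 = v - v2"
    have v1: "\<bar>apply_bcontfun v1 i\<bar> \<le> e" for i
      using clamp_aux1[OF Mh[of i] _ vb[of i]] e v2 unfolding v1_def f2_def by simp
    have "norm v1 \<le> e" by (rule norm_le1_linf) (rule v1)
    then have p1: "\<bar>\<psi> v1\<bar> \<le> e" using bnd[of v1] by linarith
    have "norm (a + (1/M') *\<^sub>R v2) \<le> 1"
    proof (rule norm_le1_linf)
      fix i
      have "\<bar>(1/M') * f2 i\<bar> \<le> h i" using f2b[of i] M'1 by (simp add: abs_mult field_simps)
      moreover have "apply_bcontfun (a + (1/M') *\<^sub>R v2) i = apply_bcontfun a i + (1/M') * f2 i"
        using v2 by simp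
      ultimately show "\<bar>apply_bcontfun (a + (1/M') *\<^sub>R v2) i\<bar> \<le> 1"
        using h_def[of i] abs_triangle_ineq[of "apply_bcontfun a i" "(1/M') * f2 i"] by linarith
    qed
    then have "\<psi> (a + (1/M') *\<^sub>R v2) \<le> 1" using bnd[of "a + (1/M') *\<^sub>R v2"] by linarith
    then have q1: "(1/M') * \<psi> v2 \<le> 0" using pa linear_add[OF lin] linear_scale[OF lin] by simp
    have "norm (a - (1/M') *\<^sub>R v2) \<le> 1"
    proof (rule norm_le1_linf)
      fix i
      have "\<bar>(1/M') * f2 i\<bar> \<le> h i" using f2b[of i] M'1 by (simp add: abs_mult field_simps)
      moreover have "apply_bcontfun (a - (1/M') *\<^sub>R v2) i = apply_bcontfun a i - (1/M') * f2 i"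
        using v2 by simp
      ultimately show "\<bar>apply_bcontfun (a - (1/M') *\<^sub>R v2) i\<bar> \<le> 1"
        using h_def[of i] abs_triangle_ineq4[of "apply_bcontfun a i" "(1/M') * f2 i"] by linarith
    qed
    then have "\<psi> (a - (1/M') *\<^sub>R v2) \<le> 1" using bnd[of "a - (1/M') *\<^sub>R v2"] by linarith
    then have q2: "(1/M') * \<psi> v2 \<ge> 0" using pa linear_diff[OF lin] linear_scale[OF lin] by simp
    have "\<psi> v2 = 0" using q1 q2 M'1 by (simp add: zero_le_mult_iff mult_le_0_iff)
    moreover have "\<psi> v = \<psi> v1 + \<psi> v2" unfolding v1_def using linear_diff[OF lin] by simp
    ultimately show ?thesis using p1 by simp
  qed
  then show ?thesis by (metis abs_le_zero_iff field_le_epsilon add_0)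
qed

lemma clamp_decomp:
  fixes \<psi> :: "linf \<Rightarrow> real" and a b :: linf
  assumes lin: "linear \<psi>" and bnd: "\<And>u. \<bar>\<psi> u\<bar> \<le> norm u"
    and a: "norm a \<le> 1" and pa: "\<psi> a = 1"
    and M: "\<And>e. e > 0 \<Longrightarrow> \<exists>M. \<forall>i. \<bar>apply_bcontfun b i\<bar> \<le> e + M * (1 - \<bar>apply_bcontfun a i\<bar>)"
    and b: "norm b \<le> 1"
  shows "\<exists>c r. b = c + r \<and> norm (a + c) \<le> 1 \<and> norm (a - r) \<le> 1 \<and> \<psi> c = 0 \<and> \<psi> r = 0"
proof -
  have ai: "\<bar>apply_bcontfun a i\<bar> \<le> 1" for i using app_le_norm[of a i] a by simp
  have bi: "\<bar>apply_bcontfun b i\<bar> \<le> 1" for i using app_le_norm[of b i] b by simp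
  define fc where "fc i = max (-1) (min 1 (apply_bcontfun a i + apply_bcontfun b i)) - apply_bcontfun a i" for i
  have fcb: "\<bar>fc i\<bar> \<le> \<bar>apply_bcontfun b i\<bar>" for i
    using clamp_aux2[OF ai[of i] bi[of i]] unfolding fc_def .
  define c where "c = Bcontfun fc"
  have c: "apply_bcontfun c = fc" unfolding c_def using fcb bi by (intro app_mk) (rule order_trans)
  define r where "r = b - c"
  have rb: "\<bar>apply_bcontfun r i\<bar> \<le> \<bar>apply_bcontfun b i\<bar>" for i
    using clamp_aux3[OF ai[of i] bi[of i]] unfolding r_def by (simp add: c fc_def)
  have "norm (a + c) \<le> 1"
    by (rule norm_le1_linf) (use clamp_aux4[OF ai bi] in \<open>simp add: c fc_def\<close>)
  moreover have "norm (a - r) \<le> 1"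
  proof (rule norm_le1_linf)
    fix i show "\<bar>apply_bcontfun (a - r) i\<bar> \<le> 1"
      using clamp_aux5[OF ai[of i] bi[of i]] unfolding r_def by (simp add: c fc_def)
  qed
  moreover have "\<psi> c = 0" by (rule psi_null[OF lin bnd a pa M]) (use fcb c in auto)
  moreover have "\<psi> r = 0" by (rule psi_null[OF lin bnd a pa M]) (use rb in auto)
  moreover have "b = c + r" unfolding r_def by simp
  ultimately show ?thesis by blast
qed

lemma linear_blinfun: "linear (blinfun_apply f)"
  by (rule bounded_linear.linear[OF blinfun.bounded_linear_right])

lemma count_step:
  fixes T :: "'a::real_vector \<Rightarrow> 'b::real_vector"
  assumes lT: "linear T" and lh: "linear h" and lH: "\<And>g. g \<in> H \<Longrightarrow> linear (g :: 'a \<Rightarrow> real)"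
    and Bb: "finite Bb" "independent Bb" "span Bb = (UNIV::'b set)"
  shows "dim (T ` {x. \<forall>g\<in>H. g x = 0}) \<le> dim (T ` {x. \<forall>g\<in>insert h H. g x = 0}) + 1"
proof -
  define K where "K = {x. \<forall>g\<in>H. g x = 0}"
  define K' where "K' = {x. \<forall>g\<in>insert h H. g x = 0}"
  show ?thesis
  proof (cases "\<forall>x\<in>K. h x = 0")
    case True
    then have "K' = K" unfolding K_def K'_def by auto
    then show ?thesis unfolding K_def K'_def by simp
  next
    case False
    then obtain e where e: "e \<in> K" "h e \<noteq> 0" by blast
    have "T ` K \<subseteq> span (insert (T e) (T ` K'))"
    proof
      fix y assume "y \<in> T ` K"
      then obtain x where x: "x \<in> K" "y = T x" by blast
      define x' where "x' = x - (h x / h e) *\<^sub>R e"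
      have "x' \<in> K'" unfolding K'_def
      proof (intro CollectI ballI)
        fix g assume "g \<in> insert h H"
        then show "g x' = 0"
        proof
          assume "g = h" then show ?thesis unfolding x'_def using e(2)
            by (simp add: linear_diff[OF lh] linear_scale[OF lh])
        next
          assume g: "g \<in> H"
          then have "g x = 0" "g e = 0" using x e unfolding K_def by auto
          then show ?thesis unfolding x'_def using lH[OF g]
            by (simp add: linear_diff[OF lH[OF g]] linear_scale[OF lH[OF g]])
        qed
      qed
      moreover have "T x = T x' + (h x / h e) *\<^sub>R T e"
        unfolding x'_def by (simp add: linear_diff[OF lT] linear_scale[OF lT])
      moreover have "T x' \<in> span (insert (T e) (T ` K'))" using \<open>x' \<in> K'\<close> by (intro span_base) blast
      moreover have "T e \<in> span (insert (T e) (T ` K'))" by (intro span_base) blast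
      ultimately show "y \<in> span (insert (T e) (T ` K'))" unfolding x(2)
        by (metis span_add span_scale)
    qed
    then have "dim (T ` K) \<le> dim (insert (T e) (T ` K'))" by (rule fd_dim_mono[OF Bb])
    also have "\<dots> \<le> dim (T ` K') + 1" by (rule fd_dim_insert[OF Bb])
    finally show ?thesis unfolding K_def K'_def .
  qed
qed

lemma count_lemma:
  fixes T :: "'a::real_vector \<Rightarrow> 'b::real_vector"
  assumes lT: "linear T" and fH: "finite H" and lH: "\<And>g. g \<in> H \<Longrightarrow> linear (g :: 'a \<Rightarrow> real)"
    and Bb: "finite Bb" "independent Bb" "span Bb = (UNIV::'b set)"
  shows "dim (range T) \<le> dim (T ` {x. \<forall>g\<in>H. g x = 0}) + card H"
  using fH lH
proof (induction H rule: finite_induct)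
  case empty then show ?case by simp
next
  case (insert h H)
  have "dim (range T) \<le> dim (T ` {x. \<forall>g\<in>H. g x = 0}) + card H" using insert by auto
  also have "dim (T ` {x. \<forall>g\<in>H. g x = 0}) \<le> dim (T ` {x. \<forall>g\<in>insert h H. g x = 0}) + 1"
    by (rule count_step[OF lT _ _ Bb]) (use insert in auto)
  finally show ?case using insert by simp
qed

lemma linear_eval_bcontfun: "linear (\<lambda>u::('x::topological_space \<Rightarrow>\<^sub>C real). apply_bcontfun u z)"
  by (intro linearI) simp_all

lemma dual_independent_finite:
  fixes BX :: "'a::real_normed_vector set" and Bp :: "('a \<Rightarrow>\<^sub>L real) set"
  assumes fin: "finite BX" "span BX = UNIV" and ind: "independent Bp"
  shows "finite Bp"
proof -
  define r0 where "r0 f = (\<lambda>z. if of_discrete z \<in> BX then blinfun_apply f (of_discrete z) else 0)"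
    for f :: "'a \<Rightarrow>\<^sub>L real"
  define \<rho> :: "('a \<Rightarrow>\<^sub>L real) \<Rightarrow> ('a discrete \<Rightarrow>\<^sub>C real)" where "\<rho> f = Bcontfun (r0 f)" for f
  have r0b: "norm (r0 f z) \<le> (\<Sum>b\<in>BX. \<bar>blinfun_apply f b\<bar>)" for f z
    unfolding r0_def using fin(1) by (auto intro: member_le_sum[where f="\<lambda>b. \<bar>blinfun_apply f b\<bar>"])
  have app: "apply_bcontfun (\<rho> f) = r0 f" for f
    unfolding \<rho>_def by (rule Bcontfun_inverse[OF bcontfun_discrete[OF r0b]])
  have l\<rho>: "linear \<rho>"
  proof (rule linearI)
    fix f g show "\<rho> (f + g) = \<rho> f + \<rho> g"
      by (rule bcontfun_eqI) (simp add: app r0_def plus_blinfun.rep_eq)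
  next
    fix c f show "\<rho> (c *\<^sub>R f) = c *\<^sub>R \<rho> f"
      by (rule bcontfun_eqI) (simp add: app r0_def scaleR_blinfun.rep_eq)
  qed
  have inj: "inj_on \<rho> (span Bp)"
  proof (rule inj_onI)
    fix f g
    assume fg: "\<rho> f = \<rho> g"
    have "blinfun_apply f x = blinfun_apply g x" if x: "x \<in> BX" for x
    proof -
      have "r0 f (discrete x) = r0 g (discrete x)" using app fg by metis
      then show ?thesis using x unfolding r0_def by (simp add: discrete_inverse)
    qed
    then have "blinfun_apply f x = blinfun_apply g x" for x
      using linear_eq_on_span[OF linear_blinfun linear_blinfun, of BX f g x] fin(2) by blast
    then show "f = g" by (rule blinfun_eqI)
  qed
  have ind2: "independent (\<rho> ` Bp)" by (rule linear_independent_injective_image[OF l\<rho> ind inj])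
  define d0 where "d0 b = (\<lambda>z::'a discrete. if of_discrete z = b then (1::real) else 0)" for b
  have d0b: "norm (d0 b z) \<le> 1" for b z unfolding d0_def by simp
  define \<delta> where "\<delta> b = Bcontfun (d0 b)" for b
  have appd: "apply_bcontfun (\<delta> b) = d0 b" for b
    unfolding \<delta>_def by (rule Bcontfun_inverse[OF bcontfun_discrete[OF d0b]])
  define E where "E = \<delta> ` BX"
  have "\<rho> f \<in> span E" for f
  proof -
    have "\<rho> f = (\<Sum>b\<in>BX. blinfun_apply f b *\<^sub>R \<delta> b)"
    proof (rule bcontfun_eqI)
      fix z
      have "apply_bcontfun (\<Sum>b\<in>BX. blinfun_apply f b *\<^sub>R \<delta> b) z
          = (\<Sum>b\<in>BX. apply_bcontfun (blinfun_apply f b *\<^sub>R \<delta> b) z)"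
        by (rule linear_sum[OF linear_eval_bcontfun])
      also have "\<dots> = (\<Sum>b\<in>BX. if of_discrete z = b then blinfun_apply f b else 0)"
        by (rule sum.cong) (auto simp: appd d0_def)
      also have "\<dots> = r0 f z" unfolding r0_def using fin(1) by (simp add: sum.delta')
      finally show "apply_bcontfun (\<rho> f) z = apply_bcontfun (\<Sum>b\<in>BX. blinfun_apply f b *\<^sub>R \<delta> b) z"
        by (simp add: app)
    qed
    also have "\<dots> \<in> span E" unfolding E_def
      by (intro span_sum span_scale span_base) auto
    finally show ?thesis .
  qed
  then have "\<rho> ` Bp \<subseteq> span E" by blast
  moreover have "finite E" unfolding E_def using fin(1) by simp
  ultimately have "finite (\<rho> ` Bp)" using independent_span_bound ind2 by blast
  moreover have "inj_on \<rho> Bp" using inj span_superset inj_on_subset by blast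
  ultimately show ?thesis using finite_imageD by blast
qed

theorem theorem1:
  fixes T :: "'a::real_normed_vector \<Rightarrow> 'b::real_normed_vector"
    and x0 :: 'a and k :: nat
  assumes "\<exists>B::'a set. finite B \<and> span B = UNIV"
    and "\<exists>B::'b set. finite B \<and> span B = UNIV"
    and "hahn_banach_op T"
    and "dim (range T) = k"
    and "onorm T = 1"
    and "x0 \<in> unit_sphere"
    and "norm (T x0) = 1"
  shows "\<exists>F. support_set_of_ball F \<and> T x0 \<in> F \<and> set_dim F \<ge> int k - 1 - face_dim x0"
proof -
  from assms(1) obtain BX :: "'a set" where BX: "finite BX" "span BX = UNIV" by blast
  from assms(2) obtain BY :: "'b set" where BY: "finite BY" "span BY = UNIV" by blast
  from fin_basis[OF BY] obtain Bb :: "'b set" where Bb: "finite Bb" "independent Bb" "span Bb = UNIV" by blast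
  have nx0: "norm x0 = 1" using assms(6) unfolding unit_sphere_def by simp
  have HB1: "bounded_linear T" using assms(3) unfolding hahn_banach_wrt_def by blast
  have HB2: "\<And>J::'a \<Rightarrow> linf. linear J \<Longrightarrow> (\<forall>x. norm (J x) = norm x) \<Longrightarrow>
      (\<exists>S::linf \<Rightarrow> 'b. bounded_linear S \<and> onorm S = onorm T \<and> (\<forall>x. S (J x) = T x))"
    using assms(3) unfolding hahn_banach_wrt_def by blast
  have lT: "linear T" using HB1 bounded_linear.linear by blast
  obtain J :: "'a \<Rightarrow> linf" where J: "linear J" "\<And>x. norm (J x) = norm x" using embed_exists[OF BX] by blast
  obtain S :: "linf \<Rightarrow> 'b" where S: "bounded_linear S" "onorm S = 1" "\<And>x. S (J x) = T x"
    using HB2[OF J(1)] J(2) assms(5) by metis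
  have lS: "linear S" using S(1) bounded_linear.linear by blast
  have Sn: "norm (S u) \<le> norm u" for u using onorm[OF S(1), of u] S(2) by simp
  obtain ys :: "'b \<Rightarrow> real" where ys: "linear ys" "ys (T x0) = 1" "\<And>y. \<bar>ys y\<bar> \<le> norm y"
    using hb_exists[OF BY assms(7)] by blast
  define \<psi> where "\<psi> = (\<lambda>u. ys (S u))"
  have l\<psi>: "linear \<psi>" unfolding \<psi>_def using linear_compose[OF lS ys(1)] by (simp add: o_def)
  have b\<psi>: "\<bar>\<psi> u\<bar> \<le> norm u" for u unfolding \<psi>_def using ys(3)[of "S u"] Sn[of u] by linarith
  define a where "a = J x0"
  have na: "norm a \<le> 1" using J(2) nx0 a_def by simp
  have pa: "\<psi> a = 1" unfolding \<psi>_def a_def using S(3) ys(2) by simp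
  define F where "F = unit_ball \<inter> {y. ys y = 1}"
  have Tx0F: "T x0 \<in> F" unfolding F_def unit_ball_def using assms(7) ys(2) by simp
  note U = unit_functional_blinfun[OF ys(1) ys(3) assms(7) ys(2)]
  have supp: "support_set_of_ball F"
    unfolding support_set_of_ball_def
  proof (intro exI[of _ "Blinfun ys"] exI[of _ "1::real"] conjI)
    show "Blinfun ys \<noteq> 0"
    proof
      assume "Blinfun ys = 0"
      then have "ys (T x0) = 0" using U(3) by (metis zero_blinfun.rep_eq)
      then show False using ys(2) by simp
    qed
    show "\<forall>y\<in>unit_ball. blinfun_apply (Blinfun ys) y \<le> 1"
    proof
      fix y :: 'b assume "y \<in> unit_ball"
      then have "norm y \<le> 1" unfolding unit_ball_def by simp
      then show "blinfun_apply (Blinfun ys) y \<le> 1" using U(3) ys(3)[of y] by simp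
    qed
    show "\<exists>y\<in>unit_ball. blinfun_apply (Blinfun ys) y = 1" using Tx0F U(3) unfolding F_def by auto
    show "F = unit_ball \<inter> {y. blinfun_apply (Blinfun ys) y = 1}" unfolding F_def U(3) ..
  qed
  define W where "W = span ((\<lambda>y. y - T x0) ` F)"
  define X0 where "X0 = {x. \<forall>f::'a \<Rightarrow>\<^sub>L real. norm f = 1 \<and> blinfun_apply f x0 = 1 \<longrightarrow> blinfun_apply f x = 0}"
  have keyW: "T x \<in> W" if x: "x \<in> X0" for x
  proof -
    define m where "m = max 1 (norm x)"
    have m: "m \<ge> 1" "norm x \<le> m" unfolding m_def by auto
    define x' where "x' = (1/m) *\<^sub>R x"
    have nx': "norm x' \<le> 1" using m by (simp add: x'_def divide_le_eq_1)
    have x'X0: "blinfun_apply f x' = 0" if "norm f = 1" "blinfun_apply f x0 = 1" for f :: "'a \<Rightarrow>\<^sub>L real"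
      using x that unfolding X0_def x'_def by (simp add: blinfun.scaleR_right)
    define b where "b = J x'"
    have nb: "norm b \<le> 1" using J(2) nx' b_def by simp
    have Mb: "\<exists>M. \<forall>i. \<bar>apply_bcontfun b i\<bar> \<le> e + M * (1 - \<bar>apply_bcontfun a i\<bar>)" if e: "e > 0" for e
    proof -
      obtain M where M: "\<forall>g. linear g \<and> (\<forall>y. \<bar>g y\<bar> \<le> norm y) \<longrightarrow> \<bar>g x'\<bar> \<le> e + M * (1 - \<bar>g x0\<bar>)"
        using M_lemma[OF BX nx0 x'X0 e] by blast
      have "\<bar>apply_bcontfun b i\<bar> \<le> e + M * (1 - \<bar>apply_bcontfun a i\<bar>)" for i
      proof -
        define g where "g y = apply_bcontfun (J y) i" for y
        have "linear g" unfolding g_def using linear_compose[OF J(1) linear_eval_bcontfun] by (simp add: o_def)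
        moreover have "\<bar>g y\<bar> \<le> norm y" for y unfolding g_def using app_le_norm[of "J y" i] J(2) by simp
        ultimately show ?thesis using M unfolding g_def a_def b_def by blast
      qed
      then show ?thesis by blast
    qed
    from clamp_decomp[OF l\<psi> b\<psi> na pa Mb nb] obtain c r where
      cr: "b = c + r" "norm (a + c) \<le> 1" "norm (a - r) \<le> 1" "\<psi> c = 0" "\<psi> r = 0" by blast
    have Sa: "S a = T x0" unfolding a_def using S(3) .
    have F1: "S (a + c) \<in> F"
    proof -
      have "norm (S (a + c)) \<le> 1" using Sn[of "a + c"] cr(2) by linarith
      moreover have "ys (S (a + c)) = 1" using pa cr(4) linear_add[OF l\<psi>, of a c] unfolding \<psi>_def by simp
      ultimately show ?thesis unfolding F_def unit_ball_def by simp
    qed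
    have F2: "S (a - r) \<in> F"
    proof -
      have "norm (S (a - r)) \<le> 1" using Sn[of "a - r"] cr(3) by linarith
      moreover have "ys (S (a - r)) = 1" using pa cr(5) linear_diff[OF l\<psi>, of a r] unfolding \<psi>_def by simp
      ultimately show ?thesis unfolding F_def unit_ball_def by simp
    qed
    have "T x' = S b" unfolding b_def using S(3) by simp
    also have "\<dots> = (S (a + c) - T x0) - (S (a - r) - T x0)"
      using cr(1) Sa linear_add[OF lS] linear_diff[OF lS] by (simp add: algebra_simps)
    finally have Tx': "T x' = (S (a + c) - T x0) - (S (a - r) - T x0)" .
    have "S (a + c) - T x0 \<in> W" "S (a - r) - T x0 \<in> W" unfolding W_def using F1 F2
      by (auto intro!: span_base)
    then have "T x' \<in> W" unfolding Tx' W_def by (rule span_diff)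
    moreover have "T x = m *\<^sub>R T x'" using m unfolding x'_def by (simp add: linear_scale[OF lT])
    ultimately show ?thesis unfolding W_def by (simp add: span_scale)
  qed
  define D where "D = {f::'a \<Rightarrow>\<^sub>L real. norm f = 1 \<and> blinfun_apply f x0 = 1}"
  obtain g0 where g0: "linear g0" "g0 x0 = 1" "\<And>y. \<bar>g0 y\<bar> \<le> norm y" using hb_exists[OF BX nx0] by blast
  note U0 = unit_functional_blinfun[OF g0(1) g0(3) nx0 g0(2)]
  have Dne: "Blinfun g0 \<in> D" unfolding D_def using U0 g0(2) by simp
  define a0 where "a0 = (SOME a. a \<in> D)"
  have a0D: "a0 \<in> D" unfolding a0_def using Dne by (rule someI)
  define P where "P = (\<lambda>f. f - a0) ` D"
  have fd: "face_dim x0 = int (dim P)"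
    unfolding face_dim_def set_dim_def P_def a0_def D_def using Dne D_def by auto
  obtain Bp where Bp: "Bp \<subseteq> P" "independent Bp" "P \<subseteq> span Bp" "card Bp = dim P"
    using basis_exists by blast
  have fBp: "finite Bp" by (rule dual_independent_finite[OF BX Bp(2)])
  define H where "H = blinfun_apply ` insert a0 Bp"
  have fH: "finite H" unfolding H_def using fBp by simp
  have "card H \<le> card (insert a0 Bp)" unfolding H_def using fBp by (intro card_image_le) simp
  also have "\<dots> \<le> card Bp + 1" using fBp by (simp add: card_insert_if)
  finally have cH: "card H \<le> dim P + 1" using Bp(4) by simp
  have lH: "\<And>g. g \<in> H \<Longrightarrow> linear g" unfolding H_def using linear_blinfun by auto
  define K where "K = {x. \<forall>g\<in>H. g x = 0}"
  have KX0: "K \<subseteq> X0"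
  proof
    fix x assume "x \<in> K"
    then have ax: "blinfun_apply a0 x = 0" and px: "\<And>p. p \<in> Bp \<Longrightarrow> blinfun_apply p x = 0"
      unfolding K_def H_def by auto
    have sub: "subspace {q::'a \<Rightarrow>\<^sub>L real. blinfun_apply q x = 0}"
      unfolding subspace_def by (simp add: plus_blinfun.rep_eq scaleR_blinfun.rep_eq)
    have sp: "blinfun_apply q x = 0" if "q \<in> span Bp" for q
      using span_induct[OF that sub] px by blast
    show "x \<in> X0" unfolding X0_def
    proof (intro CollectI allI impI)
      fix f :: "'a \<Rightarrow>\<^sub>L real" assume "norm f = 1 \<and> blinfun_apply f x0 = 1"
      then have "f \<in> D" unfolding D_def by simp
      then have "f - a0 \<in> span Bp" using Bp(3) unfolding P_def by auto
      then have "blinfun_apply (f - a0) x = 0" by (rule sp)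
      then show "blinfun_apply f x = 0" using ax by (simp add: minus_blinfun.rep_eq)
    qed
  qed
  have cnt: "dim (range T) \<le> dim (T ` K) + card H" unfolding K_def by (rule count_lemma[OF lT fH lH Bb])
  have TKW: "T ` K \<subseteq> W" using KX0 keyW by blast
  define a' where "a' = (SOME a. a \<in> F)"
  have a'F: "a' \<in> F" unfolding a'_def using Tx0F by (rule someI)
  have gen: "(\<lambda>y. y - T x0) ` F \<subseteq> span ((\<lambda>y. y - a') ` F)"
  proof
    fix z assume "z \<in> (\<lambda>y. y - T x0) ` F"
    then obtain y where y: "y \<in> F" "z = y - T x0" by blast
    have "y - a' \<in> span ((\<lambda>y. y - a') ` F)" "T x0 - a' \<in> span ((\<lambda>y. y - a') ` F)"
      using y(1) Tx0F by (auto intro!: span_base)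
    then have "(y - a') - (T x0 - a') \<in> span ((\<lambda>y. y - a') ` F)" by (rule span_diff)
    then show "z \<in> span ((\<lambda>y. y - a') ` F)" using y(2) by simp
  qed
  have "W \<subseteq> span ((\<lambda>y. y - a') ` F)" unfolding W_def by (rule span_minimal[OF gen subspace_span])
  then have "T ` K \<subseteq> span ((\<lambda>y. y - a') ` F)" using TKW by blast
  then have dK: "dim (T ` K) \<le> dim ((\<lambda>y. y - a') ` F)" by (rule fd_dim_mono[OF Bb])
  have sd: "set_dim F = int (dim ((\<lambda>y. y - a') ` F))" unfolding set_dim_def a'_def using Tx0F by auto
  have kk: "k \<le> dim ((\<lambda>y. y - a') ` F) + dim P + 1" using cnt cH dK assms(4) by linarith
  have "int k - 1 - face_dim x0 \<le> set_dim F" unfolding sd fd using kk by linarith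
  then show ?thesis using supp Tx0F by blast
qed

end
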